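(* Assume $abcd\neq0$. Let $(\omega_M)_{M\ge1}$ be points of $B_{out}$, let $\theta_M>0$ be defined by $\cosh\theta_M=|x(\omega_M)|$, and suppose $M\theta_M\to\theta_*\in(0,\infty)$ as $M\to\infty$. Then \[\lim_{M\to\infty}\frac{\mathcal{E}_M(\omega_M)}{M}=\frac{1}{\sinh^2\theta_*}\left(\frac{\sinh2\theta_*}{2\theta_*}-1\right).\]
   Context: Setting: $C=\begin{bmatrix} a&b\\ c&d\end{bmatrix}$ a fixed $2\times2$ unitary matrix, $\Delta=\det C$, a fixed square root $\Delta^{1/2}$; for each $M\ge1$, $\Gamma_M=\{0,\dots,M-1\}$ and $E_M$ is the linear map on $\ell^2(\Gamma_M;\mathbb{C}^2)$ with $(E_M\varphi)(x)=P\varphi(x+1)+Q\varphi(x-1)$, $\varphi(-1)=\varphi(M)=0$, $P=\begin{bmatrix} a&b\\0&0\end{bmatrix}$, $Q=\begin{bmatrix}0&0\\c&d\end{bmatrix}$. For $\omega$ on the unit circle let $z=\Delta^{1/2}\omega$ and let $\varphi$ be the unique solution of $(z-E_M)\varphi=\delta_0|R\rangle$, $|R\rangle=(0,1)^\top$; the energy is $\mathcal{E}_M(\omega)=\sum_{n=0}^{M-1}\|\varphi(n)\|^2_{\mathbb{C}^2}$. Let $x(\omega)=\frac{\omega+\omega^{-1}}{2|a|}$ and $B_{out}=\{\omega:|\omega|=1,\ |x(\omega)|>1\}$. *)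

theory Defs
  imports Complex_Main
begin

text \<open>The coin matrix C = [[a,b],[c,d]] is unitary: C^* C = I.\<close>
definition unitary2 :: "complex \<Rightarrow> complex \<Rightarrow> complex \<Rightarrow> complex \<Rightarrow> bool" where
  "unitary2 a b c d \<longleftrightarrow>
     cnj a * a + cnj c * c = 1 \<and> cnj b * b + cnj d * d = 1 \<and> cnj a * b + cnj c * d = 0"

definition normsq2 :: "complex \<times> complex \<Rightarrow> real" where
  "normsq2 v = (cmod (fst v))\<^sup>2 + (cmod (snd v))\<^sup>2"

definition extM :: "nat \<Rightarrow> (int \<Rightarrow> complex \<times> complex) \<Rightarrow> int \<Rightarrow> complex \<times> complex" where
  "extM M \<phi> n = (if 0 \<le> n \<and> n < int M then \<phi> n else (0, 0))"

text \<open>(E_M phi)(x) = P phi(x+1) + Q phi(x-1), P = [[a,b],[0,0]], Q = [[0,0],[c,d]].\<close>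
definition EM :: "complex \<Rightarrow> complex \<Rightarrow> complex \<Rightarrow> complex \<Rightarrow> nat \<Rightarrow>
                  (int \<Rightarrow> complex \<times> complex) \<Rightarrow> int \<Rightarrow> complex \<times> complex" where
  "EM a b c d M \<phi> x =
     (let u = extM M \<phi> (x + 1); v = extM M \<phi> (x - 1)
      in (a * fst u + b * snd u, c * fst v + d * snd v))"

text \<open>phi is an element of l^2(Gamma_M; C^2) (zero outside Gamma_M) solving
  (z - E_M) phi = delta_0 |R>, |R> = (0,1).\<close>
definition solves :: "complex \<Rightarrow> complex \<Rightarrow> complex \<Rightarrow> complex \<Rightarrow> nat \<Rightarrow> complex \<Rightarrow>
                      (int \<Rightarrow> complex \<times> complex) \<Rightarrow> bool" where
  "solves a b c d M z \<phi> \<longleftrightarrow>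
     (\<forall>n. \<not> (0 \<le> n \<and> n < int M) \<longrightarrow> \<phi> n = (0, 0)) \<and>
     (\<forall>n. 0 \<le> n \<and> n < int M \<longrightarrow>
        (z * fst (\<phi> n) - fst (EM a b c d M \<phi> n), z * snd (\<phi> n) - snd (EM a b c d M \<phi> n))
          = (if n = 0 then (0, 1) else (0, 0)))"

text \<open>Energy E_M(omega) with z = Delta^(1/2) * omega, where s is the fixed square root of Delta.\<close>
definition energy :: "complex \<Rightarrow> complex \<Rightarrow> complex \<Rightarrow> complex \<Rightarrow> complex \<Rightarrow> nat \<Rightarrow> complex \<Rightarrow> real" where
  "energy a b c d s M \<omega> =
     (let \<phi> = (THE \<phi>. solves a b c d M (s * \<omega>) \<phi>)
      in \<Sum>n\<in>{0..<int M}. normsq2 (\<phi> n))"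

definition xfun :: "complex \<Rightarrow> complex \<Rightarrow> complex" where
  "xfun a \<omega> = (\<omega> + inverse \<omega>) / (2 * of_real (cmod a))"

definition Bout :: "complex \<Rightarrow> complex set" where
  "Bout a = {\<omega>. cmod \<omega> = 1 \<and> cmod (xfun a \<omega>) > 1}"

end

theory Submission
  imports Defs
begin


lemma unit_facts:
  assumes "unitary2 a b c d"
  shows "d = (a*d-b*c) * cnj a" "b = - (a*d-b*c) * cnj c"
    "(cmod a)^2 + (cmod c)^2 = 1" "(cmod b)^2 + (cmod d)^2 = 1"
proof -
  have u1: "cnj a * a + cnj c * c = 1" and u2: "cnj b * b + cnj d * d = 1"
    and u3: "cnj a * b + cnj c * d = 0" using assms by (auto simp: unitary2_def)
  have u3': "cnj b * a + cnj d * c = 0" using arg_cong[OF u3, of cnj] by (simp add: mult.commute)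
  show "d = (a*d-b*c) * cnj a"
  proof -
    have "(a*d-b*c) * cnj a = d * (cnj a * a) - c * (cnj a * b)" by (simp add: algebra_simps)
    also have "cnj a * b = - cnj c * d" using u3 by (simp add: eq_neg_iff_add_eq_0)
    also have "d * (cnj a * a) - c * (- cnj c * d) = d * (cnj a * a + cnj c * c)" by (simp add: algebra_simps)
    finally show ?thesis using u1 by simp
  qed
  show "b = - (a*d-b*c) * cnj c"
  proof -
    have "- (a*d-b*c) * cnj c = b * (cnj c * c) - a * (cnj c * d)" by (simp add: algebra_simps)
    also have "cnj c * d = - cnj a * b" using u3 by (simp add: eq_neg_iff_add_eq_0 add.commute)
    also have "b * (cnj c * c) - a * (- cnj a * b) = b * (cnj a * a + cnj c * c)" by (simp add: algebra_simps)
    finally show ?thesis using u1 by simp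
  qed
  have "complex_of_real ((cmod a)^2 + (cmod c)^2) = 1"
    using u1 unfolding of_real_add complex_norm_square by (simp add: mult.commute)
  then show "(cmod a)^2 + (cmod c)^2 = 1" using of_real_eq_1_iff by blast
  have "complex_of_real ((cmod b)^2 + (cmod d)^2) = 1"
    using u2 unfolding of_real_add complex_norm_square by (simp add: mult.commute)
  then show "(cmod b)^2 + (cmod d)^2 = 1" using of_real_eq_1_iff by blast
qed



definition psiL :: "(nat \<Rightarrow> complex) \<Rightarrow> complex \<Rightarrow> complex \<Rightarrow> nat \<Rightarrow> complex" where
  "psiL V \<beta> \<mu> k = V k * \<beta> / \<mu> ^ k"
definition psiR :: "(nat \<Rightarrow> complex) \<Rightarrow> complex \<Rightarrow> complex \<Rightarrow> nat \<Rightarrow> complex" where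
  "psiR V \<delta> \<mu> k = (V (Suc k) - \<delta> * V k) / \<mu> ^ k"

lemma key_coef:
  fixes a b c d z \<mu> \<beta> \<delta> X :: complex
  assumes hb: "z*\<beta> = b*\<mu>" and hdl: "z*\<mu>*\<delta> = d" and hd: "\<mu>^2*a = d"
    and hX: "X*a*z*\<mu> = z^2 + a*d - b*c" and nz: "z \<noteq> 0" "\<mu> \<noteq> 0" "a \<noteq> 0"
  shows "z*\<mu> = c*\<beta> + d*X - d*\<delta>"
proof -
  have "(z*a*\<mu>)*(z*\<mu>) = (z*a*\<mu>)*(c*\<beta> + d*X - d*\<delta>)"
    using hb hdl hd hX by algebra
  then show ?thesis using nz by simp
qed

lemma A1:
  fixes a b z \<mu> \<beta> \<delta> :: complex
  assumes hb: "z*\<beta> = b*\<mu>" and hab: "a*\<beta> = b*\<delta>" and nz: "\<mu> \<noteq> 0"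
  shows "z * psiL V \<beta> \<mu> (Suc k) = a * psiL V \<beta> \<mu> k + b * psiR V \<delta> \<mu> k"
proof -
  have "a * psiL V \<beta> \<mu> k + b * psiR V \<delta> \<mu> k = (V k * (a*\<beta>) + b * V (Suc k) - V k * (b*\<delta>)) / \<mu>^k"
    unfolding psiL_def psiR_def using nz by (simp add: field_simps)
  also have "\<dots> = b * V (Suc k) / \<mu>^k" using hab by simp
  also have "\<dots> = z * psiL V \<beta> \<mu> (Suc k)"
    unfolding psiL_def using nz hb by (simp add: field_simps)
  finally show ?thesis by simp
qed

lemma A3:
  fixes c d z \<mu> \<beta> \<delta> X :: complex
  assumes key: "z*\<mu> = c*\<beta> + d*X - d*\<delta>" and hdl: "z*\<mu>*\<delta> = d" and nz: "\<mu> \<noteq> 0"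
    and Vrec: "V (Suc (Suc k)) = X * V (Suc k) - V k"
  shows "z * psiR V \<delta> \<mu> k = c * psiL V \<beta> \<mu> (Suc k) + d * psiR V \<delta> \<mu> (Suc k)"
proof -
  have "c * psiL V \<beta> \<mu> (Suc k) + d * psiR V \<delta> \<mu> (Suc k)
      = (V (Suc k) * (c*\<beta> + d*X - d*\<delta>) - d * V k) / \<mu>^(Suc k)"
    unfolding psiL_def psiR_def Vrec using nz by (simp add: field_simps)
  also have "\<dots> = (V (Suc k) * (z*\<mu>) - (z*\<mu>*\<delta>) * V k) / \<mu>^(Suc k)"
    using key hdl by simp
  also have "\<dots> = z * psiR V \<delta> \<mu> k"
    unfolding psiR_def using nz by (simp add: field_simps)
  finally show ?thesis by simp
qed



lemma solves_iff:
  "solves a b c d M z \<phi> \<longleftrightarrow>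
     (\<forall>n. \<not> (0 \<le> n \<and> n < int M) \<longrightarrow> \<phi> n = (0, 0)) \<and>
     (\<forall>n. 0 \<le> n \<and> n < int M \<longrightarrow>
        z * fst (\<phi> n) = a * fst (extM M \<phi> (n+1)) + b * snd (extM M \<phi> (n+1)) \<and>
        z * snd (\<phi> n) = c * fst (extM M \<phi> (n-1)) + d * snd (extM M \<phi> (n-1)) + (if n = 0 then 1 else 0))"
  unfolding solves_def EM_def Let_def by (auto simp: algebra_simps)

lemma the_solution:
  fixes a b c d z :: complex and pL pR :: "nat \<Rightarrow> complex"
  assumes M: "M \<ge> 1" and nz: "z \<noteq> 0" "d \<noteq> 0"
    and p0: "pL 0 = 0" "pR 0 = 1"
    and rec1: "\<And>k. z * pL (Suc k) = a * pL k + b * pR k"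
    and rec2: "\<And>k. z * pR k = c * pL (Suc k) + d * pR (Suc k)"
    and den: "pR (M - 1) \<noteq> 0"
  defines "r \<equiv> 1 / (z * pR (M - 1))"
  shows "(THE \<phi>. solves a b c d M z \<phi>) =
     (\<lambda>n. if 0 \<le> n \<and> n < int M then (r * pL (nat (int M - 1 - n)), r * pR (nat (int M - 1 - n))) else (0, 0))"
    (is "_ = ?phi")
proof (rule the_equality)
  show "solves a b c d M z ?phi"
    unfolding solves_iff
  proof (intro conjI allI impI)
    fix n :: int assume n: "0 \<le> n \<and> n < int M"
    define k where "k = nat (int M - 1 - n)"
    show "z * fst (?phi n) = a * fst (extM M ?phi (n+1)) + b * snd (extM M ?phi (n+1))"
    proof (cases "n = int M - 1")
      case True
      then show ?thesis using n p0 by (simp add: extM_def)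
    next
      case False
      then have k: "k = Suc (nat (int M - 1 - (n+1)))" using n unfolding k_def by (subst Suc_nat_eq_nat_zadd1; simp)
      have "z * fst (?phi n) = r * (z * pL k)" using n k_def by simp
      also have "\<dots> = r * (a * pL (nat (int M - 1 - (n+1))) + b * pR (nat (int M - 1 - (n+1))))"
        using rec1 k by simp
      also have "\<dots> = a * fst (extM M ?phi (n+1)) + b * snd (extM M ?phi (n+1))"
        using n False by (simp add: extM_def algebra_simps)
      finally show ?thesis .
    qed
    show "z * snd (?phi n) = c * fst (extM M ?phi (n-1)) + d * snd (extM M ?phi (n-1)) + (if n = 0 then 1 else 0)"
    proof (cases "n = 0")
      case True
      have "nat (int M - 1) = M - 1" using M by simp
      then show ?thesis using True M nz den by (simp add: extM_def r_def)
    next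
      case False
      have k: "nat (int M - 1 - (n-1)) = Suc k" using n False unfolding k_def by (subst Suc_nat_eq_nat_zadd1; simp)
      have "z * snd (?phi n) = r * (z * pR k)" using n k_def by simp
      also have "\<dots> = r * (c * pL (Suc k) + d * pR (Suc k))" using rec2 by simp
      also have "\<dots> = c * fst (extM M ?phi (n-1)) + d * snd (extM M ?phi (n-1))"
        using n False k by (simp add: extM_def algebra_simps)
      finally show ?thesis using False by simp
    qed
  qed auto
next
  fix \<phi> assume sol: "solves a b c d M z \<phi>"
  note S = sol[unfolded solves_iff]
  have out: "\<And>n. \<not> (0 \<le> n \<and> n < int M) \<Longrightarrow> \<phi> n = (0,0)" using S by blast
  have eqs: "\<And>n. 0 \<le> n \<Longrightarrow> n < int M \<Longrightarrow>
        z * fst (\<phi> n) = a * fst (extM M \<phi> (n+1)) + b * snd (extM M \<phi> (n+1)) \<and>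
        z * snd (\<phi> n) = c * fst (extM M \<phi> (n-1)) + d * snd (extM M \<phi> (n-1)) + (if n = 0 then 1 else 0)"
    using S by blast
  define \<rho> where "\<rho> = snd (\<phi> (int M - 1))"
  have claim: "k \<le> M - 1 \<Longrightarrow> \<phi> (int (M - 1 - k)) = (\<rho> * pL k, \<rho> * pR k)" for k
  proof (induction k)
    case 0
    have "z * fst (\<phi> (int M - 1)) = 0" using eqs[of "int M - 1"] M by (simp add: extM_def)
    then have "fst (\<phi> (int M - 1)) = 0" using nz by simp
    then show ?case using M p0 \<rho>_def by (simp add: of_nat_diff prod_eq_iff)
  next
    case (Suc k)
    define n where "n = int (M - 1 - k)"
    have IH: "\<phi> n = (\<rho> * pL k, \<rho> * pR k)" using Suc n_def by simp
    have n1: "n \<ge> 1" "n < int M" using Suc.prems M unfolding n_def by auto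
    have m: "int (M - 1 - Suc k) = n - 1" using Suc.prems unfolding n_def by simp
    have e1: "z * fst (\<phi> (n-1)) = a * fst (\<phi> n) + b * snd (\<phi> n)"
      using eqs[of "n-1"] n1 by (simp add: extM_def)
    have e2: "z * snd (\<phi> n) = c * fst (\<phi> (n-1)) + d * snd (\<phi> (n-1))"
      using eqs[of "n"] n1 by (simp add: extM_def)
    have f: "fst (\<phi> (n-1)) = \<rho> * pL (Suc k)"
    proof -
      have "z * fst (\<phi> (n-1)) = z * (\<rho> * pL (Suc k))" using e1 IH rec1[of k] by (simp add: algebra_simps)
      then show ?thesis using nz by simp
    qed
    have g: "snd (\<phi> (n-1)) = \<rho> * pR (Suc k)"
    proof -
      have "d * snd (\<phi> (n-1)) = \<rho> * (z * pR k) - c * (\<rho> * pL (Suc k))"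
        using e2 IH f by (simp add: algebra_simps)
      also have "\<dots> = d * (\<rho> * pR (Suc k))" using rec2[of k] by (simp add: algebra_simps)
      finally show ?thesis using nz by simp
    qed
    show ?case using f g m by (simp add: prod_eq_iff)
  qed
  have "\<phi> 0 = (\<rho> * pL (M-1), \<rho> * pR (M-1))" using claim[of "M-1"] by simp
  moreover have "z * snd (\<phi> 0) = 1" using eqs[of 0] M by (simp add: extM_def)
  ultimately have "\<rho> = r" using nz den unfolding r_def by (simp add: field_simps)
  show "\<phi> = ?phi"
  proof
    fix n
    show "\<phi> n = ?phi n"
    proof (cases "0 \<le> n \<and> n < int M")
      case True
      define k where "k = nat (int M - 1 - n)"
      have "k \<le> M - 1" "int (M - 1 - k) = n" using True unfolding k_def by auto
      then show ?thesis using claim[of k] True \<open>\<rho> = r\<close> k_def by simp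
    qed (use out in auto)
  qed
qed



lemma H1: "sinh (real (Suc (Suc k)) * t) = 2 * cosh t * sinh (real (Suc k) * t) - sinh (real k * t)"
proof -
  have a: "real (Suc (Suc k)) * t = real (Suc k) * t + t" "real k * t = real (Suc k) * t - t"
    by (simp_all add: algebra_simps)
  show ?thesis unfolding a sinh_add sinh_diff by (simp add: algebra_simps)
qed

lemma H2: "(sinh (real k * t))^2 + (sinh (real (Suc k) * t))^2
   - 2 * cosh t * sinh (real k * t) * sinh (real (Suc k) * t) = (sinh t)^2"
proof -
  have a: "real (Suc k) * t = real k * t + t" by (simp add: algebra_simps)
  have c1: "(cosh (real k * t))^2 = (sinh (real k * t))^2 + 1" by (rule cosh_square_eq)
  have c2: "(cosh t)^2 = (sinh t)^2 + 1" by (rule cosh_square_eq)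
  show ?thesis unfolding a sinh_add using c1 c2 by algebra
qed

lemma H3: "4 * sinh t * (\<Sum>k<M. sinh (real k * t) * sinh (real (Suc k) * t))
   = sinh (2 * real M * t) - 2 * real M * cosh t * sinh t"
proof (induction M)
  case 0 then show ?case by simp
next
  case (Suc M)
  have a: "real (Suc M) * t = real M * t + t" "2 * real (Suc M) * t = 2 * (real M * t) + 2 * t"
    "2 * real M * t = 2 * (real M * t)"
    by (simp_all add: algebra_simps)
  have c1: "(cosh (real M * t))^2 = (sinh (real M * t))^2 + 1" by (rule cosh_square_eq)
  have c2: "(cosh t)^2 = (sinh t)^2 + 1" by (rule cosh_square_eq)
  have "4 * sinh t * (\<Sum>k<Suc M. sinh (real k * t) * sinh (real (Suc k) * t))
     = 4 * sinh t * (\<Sum>k<M. sinh (real k * t) * sinh (real (Suc k) * t))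
       + 4 * sinh t * (sinh (real M * t) * sinh (real (Suc M) * t))"
    by (simp add: algebra_simps)
  also have "\<dots> = sinh (2 * real (Suc M) * t) - 2 * real (Suc M) * cosh t * sinh t"
    unfolding Suc.IH unfolding a sinh_add cosh_add sinh_double cosh_double
    using c1 c2 by (simp add: algebra_simps power2_eq_square)
  finally show ?case .
qed


lemma cmod_real_comb:
  fixes v w :: real and \<delta> :: complex
  shows "(cmod (complex_of_real w - \<delta> * complex_of_real v))^2 = w^2 - 2*v*w*Re \<delta> + v^2 * (cmod \<delta>)^2"
  unfolding cmod_power2 by (simp add: power2_eq_square algebra_simps)

lemma sum_rev_int:
  fixes f :: "nat \<Rightarrow> 'a::comm_monoid_add"
  shows "(\<Sum>n\<in>{0..<int M}. f (nat (int M - 1 - n))) = (\<Sum>k<M. f k)"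
proof -
  have "{0..<int M} = int ` {..<M}" by (simp add: image_atLeastZeroLessThan_int atLeast0LessThan)
  then have "(\<Sum>n\<in>{0..<int M}. f (nat (int M - 1 - n))) = (\<Sum>i<M. f (nat (int M - 1 - int i)))"
    by (simp add: sum.reindex)
  also have "\<dots> = (\<Sum>i<M. f (M - Suc i))"
    by (intro sum.cong refl) (simp add: nat_diff_distrib)
  also have "\<dots> = (\<Sum>k<M. f k)" by (rule sum.nat_diff_reindex)
  finally show ?thesis .
qed

lemma energy_closed:
  fixes a b c d s \<omega> :: complex and \<theta> :: real and M :: nat
  assumes unit: "unitary2 a b c d" and sqrt: "s^2 = a*d - b*c" and nz: "a*b*c*d \<noteq> 0"
    and w1: "cmod \<omega> = 1" and tp: "\<theta> > 0" and ch: "cosh \<theta> = cmod (xfun a \<omega>)" and M: "M \<ge> 1"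
  defines "q \<equiv> (cmod b)^2"
  defines "Den \<equiv> (sinh (real M*\<theta>))^2 - 2*(1-q)*cosh \<theta>*sinh(real (M-1)*\<theta>)*sinh(real M*\<theta>)
                 + (1-q)*(sinh(real (M-1)*\<theta>))^2"
  assumes den: "Den \<noteq> 0"
  shows "energy a b c d s M \<omega> = (real M * (sinh \<theta>)^2
            + 2*q*cosh \<theta>*(\<Sum>k<M. sinh (real k*\<theta>) * sinh (real (Suc k)*\<theta>))) / Den"
proof -
  define \<Delta> where "\<Delta> = a*d - b*c"
  have dD: "d = \<Delta> * cnj a" and bD: "b = - \<Delta> * cnj c"
    and n1: "(cmod a)^2 + (cmod c)^2 = 1" and n2: "(cmod b)^2 + (cmod d)^2 = 1"
    using unit_facts[OF unit] unfolding \<Delta>_def by auto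
  have a0: "a \<noteq> 0" and b0: "b \<noteq> 0" and c0: "c \<noteq> 0" and d0: "d \<noteq> 0" using nz by auto
  have "(cmod \<Delta>)^2 * ((cmod c)^2 + (cmod a)^2) = (cmod b)^2 + (cmod d)^2"
    using bD dD by (simp add: norm_mult power_mult_distrib algebra_simps)
  then have "(cmod \<Delta>)^2 = 1" using n1 n2 by (simp add: add.commute)
  then have D1: "cmod \<Delta> = 1" using norm_ge_zero[of \<Delta>] by (auto simp: power2_eq_1_iff)
  have "cmod s ^ 2 = 1" using sqrt D1 unfolding \<Delta>_def by (metis norm_power)
  then have s1: "cmod s = 1" using norm_ge_zero[of s] by (auto simp: power2_eq_1_iff)
  have da: "cmod d = cmod a" using dD D1 by (simp add: norm_mult)
  have aq: "(cmod a)^2 = 1 - q" using n2 da unfolding q_def by simp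
  have ca: "cnj a * a = complex_of_real ((cmod a)^2)" by (metis complex_norm_square mult.commute)
  have wc: "\<omega> * cnj \<omega> = 1" using w1 by (simp add: complex_norm_square[symmetric])
  have winv: "inverse \<omega> = cnj \<omega>" using wc by (rule inverse_unique)
  define xr where "xr = Re \<omega> / cmod a"
  have xf: "xfun a \<omega> = complex_of_real xr"
    unfolding xfun_def winv complex_add_cnj xr_def using a0 by (simp add: field_simps)
  have Cx: "cosh \<theta> = \<bar>xr\<bar>" using ch xf by simp
  define \<epsilon> where "\<epsilon> = sgn xr"
  have xr0: "xr \<noteq> 0" using Cx cosh_real_pos[of \<theta>] by auto
  have e2: "\<epsilon>^2 = 1" unfolding \<epsilon>_def using xr0 by (cases "xr > 0") auto
  have xe: "xr = \<epsilon> * cosh \<theta>" unfolding \<epsilon>_def Cx by (simp add: sgn_mult_abs)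
  define z where "z = s * \<omega>"
  define \<mu> where "\<mu> = s * cnj a / complex_of_real (cmod a)"
  define \<delta> where "\<delta> = complex_of_real (cmod a) * cnj \<omega>"
  define \<beta> where "\<beta> = b * \<mu> / z"
  define X where "X = complex_of_real (2 * xr)"
  have z0: "z \<noteq> 0" unfolding z_def using s1 w1 by auto
  have mu1: "cmod \<mu> = 1" unfolding \<mu>_def using s1 a0 by (simp add: norm_mult norm_divide)
  have mu0: "\<mu> \<noteq> 0" using mu1 by auto
  have z1: "cmod z = 1" unfolding z_def using s1 w1 by (simp add: norm_mult)
  have hb: "z*\<beta> = b*\<mu>" unfolding \<beta>_def using z0 by simp
  have zd: "z*\<delta> = a*\<mu>"
  proof -
    have "z*\<delta> = s * complex_of_real (cmod a) * (\<omega> * cnj \<omega>)" unfolding z_def \<delta>_def by (simp add: algebra_simps)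
    also have "\<dots> = s * complex_of_real (cmod a)" using wc by simp
    also have "\<dots> = a*\<mu>" unfolding \<mu>_def using a0 ca
      by (simp add: field_simps power2_eq_square)
    finally show ?thesis .
  qed
  have hab: "a*\<beta> = b*\<delta>" unfolding \<beta>_def using zd z0 by (simp add: field_simps)
  have hd: "\<mu>^2*a = d"
  proof -
    have "\<mu>^2*a = s^2 * cnj a * (cnj a * a) / complex_of_real ((cmod a)^2)"
      unfolding \<mu>_def by (simp add: field_simps power2_eq_square)
    also have "\<dots> = \<Delta> * cnj a" unfolding ca using sqrt a0 unfolding \<Delta>_def by simp
    finally show ?thesis using dD by simp
  qed
  have hdl: "z*\<mu>*\<delta> = d" using zd hd by algebra
  have hX: "X*a*z*\<mu> = z^2 + a*d - b*c"
  proof -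
    have "X*a*z*\<mu> = complex_of_real (2 * Re \<omega>) * \<omega> * s^2 * (cnj a * a) / complex_of_real ((cmod a)^2)"
      unfolding X_def xr_def z_def \<mu>_def using a0 by (simp add: field_simps power2_eq_square)
    also have "\<dots> = (\<omega> + cnj \<omega>) * \<omega> * s^2" unfolding ca complex_add_cnj[symmetric] using a0 by simp
    also have "\<dots> = s^2 * \<omega>^2 + s^2 * (\<omega> * cnj \<omega>)" by (simp add: algebra_simps power2_eq_square)
    also have "\<dots> = z^2 + a*d - b*c" unfolding wc z_def using sqrt by (simp add: power_mult_distrib)
    finally show ?thesis .
  qed
  have key: "z*\<mu> = c*\<beta> + d*X - d*\<delta>" by (rule key_coef[OF hb hdl hd hX z0 mu0 a0])
  define Vr where "Vr k = \<epsilon>^(k+1) * sinh (real k * \<theta>) / sinh \<theta>" for k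
  define V where "V k = complex_of_real (Vr k)" for k
  have sh0: "sinh \<theta> \<noteq> 0" using tp by simp
  have V0: "V 0 = 0" unfolding V_def Vr_def by simp
  have "Vr 1 = 1" unfolding Vr_def using sh0 e2 by (simp add: power2_eq_square)
  then have V1: "V 1 = 1" unfolding V_def by simp
  have Vrec: "V (Suc (Suc k)) = X * V (Suc k) - V k" for k
  proof -
    have "Vr (Suc (Suc k)) = 2 * xr * Vr (Suc k) - Vr k"
      unfolding Vr_def xe H1[of k \<theta>] using e2 sh0
      by (simp add: field_simps power2_eq_square)
    then show ?thesis unfolding V_def X_def by simp
  qed
  define pL where "pL = psiL V \<beta> \<mu>"
  define pR where "pR = psiR V \<delta> \<mu>"
  have p0: "pL 0 = 0" "pR 0 = 1" unfolding pL_def pR_def psiL_def psiR_def using V0 V1 by simp_all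
  have rec1: "\<And>k. z * pL (Suc k) = a * pL k + b * pR k"
    unfolding pL_def pR_def by (rule A1[OF hb hab mu0])
  have rec2: "\<And>k. z * pR k = c * pL (Suc k) + d * pR (Suc k)"
    unfolding pL_def pR_def by (rule A3[where V=V, OF key hdl mu0 Vrec])
  define S where "S k = sinh (real k * \<theta>)" for k
  have cb: "cmod \<beta> = cmod b" unfolding \<beta>_def using mu1 z1 by (simp add: norm_mult norm_divide)
  have Red: "Re \<delta> = (1-q) * xr" unfolding \<delta>_def xr_def using a0 aq[symmetric] by (simp add: power2_eq_square)
  have cd: "(cmod \<delta>)^2 = 1-q" unfolding \<delta>_def using w1 aq by (simp add: norm_mult)
  have pe1: "(\<epsilon>^(k+1))^2 = 1" for k
  proof -
    have "(\<epsilon>^(k+1))^2 = (\<epsilon>^2)^(k+1)" by (metis power_mult mult.commute)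
    then show ?thesis using e2 by simp
  qed
  have pe2: "\<epsilon>^(k+1) * \<epsilon>^(k+2) * \<epsilon> = 1" for k
  proof -
    have "\<epsilon>^(k+1) * \<epsilon>^(k+2) * \<epsilon> = \<epsilon>^(k+1+(k+2)+1)" by (simp add: power_add)
    also have "k+1+(k+2)+1 = 2*(k+2)" by simp
    also have "\<epsilon>^(2*(k+2)) = (\<epsilon>^2)^(k+2)" by (rule power_mult)
    finally have "\<epsilon>^(k+1) * \<epsilon>^(k+2) * \<epsilon> = (\<epsilon>^2)^(k+2)" .
    then show ?thesis using e2 by simp
  qed
  have Vsq: "(Vr k)^2 = (S k)^2 / (sinh \<theta>)^2" for k
    unfolding Vr_def S_def using pe1[of k] by (simp add: power_divide power_mult_distrib)
  have Vx: "xr * Vr k * Vr (Suc k) = cosh \<theta> * S k * S (Suc k) / (sinh \<theta>)^2" for k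
  proof -
    have "xr * Vr k * Vr (Suc k) = (\<epsilon>^(k+1) * \<epsilon>^(k+2) * \<epsilon>) * cosh \<theta> * S k * S (Suc k) / (sinh \<theta>)^2"
      unfolding Vr_def S_def xe by (simp add: power2_eq_square)
    then show ?thesis using pe2[of k] by simp
  qed
  have nL: "(cmod (pL k))^2 = q * (Vr k)^2" for k
    unfolding pL_def psiL_def V_def q_def using mu1 cb by (simp add: norm_mult norm_divide norm_power power_mult_distrib)
  have nR: "(cmod (pR k))^2 = (Vr (Suc k))^2 - 2 * (1-q) * (xr * Vr k * Vr (Suc k)) + (1-q) * (Vr k)^2" for k
  proof -
    have "(cmod (pR k))^2 = (cmod (complex_of_real (Vr (Suc k)) - \<delta> * complex_of_real (Vr k)))^2"
      unfolding pR_def psiR_def V_def using mu1 by (simp add: norm_divide norm_power)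
    also have "\<dots> = (Vr (Suc k))^2 - 2 * (1-q) * (xr * Vr k * Vr (Suc k)) + (1-q) * (Vr k)^2"
      unfolding cmod_real_comb Red cd by (simp add: algebra_simps)
    finally show ?thesis .
  qed
  have nS: "(cmod (pL k))^2 + (cmod (pR k))^2 = ((sinh \<theta>)^2 + 2*q*cosh \<theta> * S k * S (Suc k)) / (sinh \<theta>)^2" for k
  proof -
    have "(cmod (pL k))^2 + (cmod (pR k))^2 = ((S k)^2 + (S (Suc k))^2 - 2 * cosh \<theta> * S k * S (Suc k)
            + 2*q*cosh \<theta> * S k * S (Suc k)) / (sinh \<theta>)^2"
      unfolding nL nR Vx Vsq using sh0 by (simp add: field_simps)
    also have "(S k)^2 + (S (Suc k))^2 - 2 * cosh \<theta> * S k * S (Suc k) = (sinh \<theta>)^2"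
      unfolding S_def by (rule H2)
    finally show ?thesis .
  qed
  have Mm: "Suc (M-1) = M" using M by simp
  have nD: "(cmod (pR (M-1)))^2 = Den / (sinh \<theta>)^2"
  proof -
    have "(cmod (pR (M-1)))^2 = (S (Suc (M-1)))^2 / (sinh \<theta>)^2 - 2 * (1-q) * (cosh \<theta> * S (M-1) * S (Suc (M-1)) / (sinh \<theta>)^2) + (1-q) * ((S (M-1))^2 / (sinh \<theta>)^2)"
      unfolding nR Vx Vsq by simp
    then show ?thesis unfolding Mm Den_def S_def using sh0 by (simp add: field_simps)
  qed
  have den0: "pR (M-1) \<noteq> 0" using nD den sh0 by auto
  define r where "r = 1 / (z * pR (M - 1))"
  have r2: "(cmod r)^2 = (sinh \<theta>)^2 / Den" unfolding r_def using z1 nD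
    by (simp add: norm_divide norm_mult power_divide)
  have TH: "(THE \<phi>. solves a b c d M z \<phi>) =
     (\<lambda>n. if 0 \<le> n \<and> n < int M then (r * pL (nat (int M - 1 - n)), r * pR (nat (int M - 1 - n))) else (0, 0))"
    unfolding r_def by (rule the_solution[OF M z0 d0 p0 rec1 rec2 den0])
  have "energy a b c d s M \<omega> = (\<Sum>n\<in>{0..<int M}. normsq2 (r * pL (nat (int M - 1 - n)), r * pR (nat (int M - 1 - n))))"
    unfolding energy_def Let_def z_def[symmetric] TH by (intro sum.cong refl) auto
  also have "\<dots> = (\<Sum>k<M. normsq2 (r * pL k, r * pR k))" by (rule sum_rev_int)
  also have "\<dots> = (\<Sum>k<M. ((sinh \<theta>)^2 + 2*q*cosh \<theta> * S k * S (Suc k)) / Den)"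
  proof (intro sum.cong refl)
    fix k
    have "normsq2 (r * pL k, r * pR k) = (cmod r)^2 * ((cmod (pL k))^2 + (cmod (pR k))^2)"
      unfolding normsq2_def by (simp add: norm_mult power_mult_distrib algebra_simps)
    also have "\<dots> = (sinh \<theta>)^2 / Den * (((sinh \<theta>)^2 + 2*q*cosh \<theta> * S k * S (Suc k)) / (sinh \<theta>)^2)"
      unfolding r2 nS by simp
    also have "\<dots> = ((sinh \<theta>)^2 + 2*q*cosh \<theta> * S k * S (Suc k)) / Den"
      using sh0 by simp
    finally show "normsq2 (r * pL k, r * pR k) = ((sinh \<theta>)^2 + 2*q*cosh \<theta> * S k * S (Suc k)) / Den" .
  qed
  also have "\<dots> = (real M * (sinh \<theta>)^2
            + 2*q*cosh \<theta>*(\<Sum>k<M. sinh (real k*\<theta>) * sinh (real (Suc k)*\<theta>))) / Den"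
    unfolding S_def by (simp add: sum_divide_distrib[symmetric] sum.distrib sum_distrib_left algebra_simps)
  finally show ?thesis .
qed

lemma sinh_over_lim: "((\<lambda>t::real. sinh t / t) \<longlongrightarrow> 1) (at 0)"
proof -
  have "((\<lambda>x::real. sinh x) has_field_derivative cosh 0) (at 0)"
    by (auto intro!: derivative_eq_intros)
  then have "((\<lambda>h. (sinh (0 + h) - sinh 0) / h) \<longlongrightarrow> cosh (0::real)) (at 0)"
    unfolding DERIV_def .
  then show ?thesis by simp
qed

theorem mainTheorem10:
  fixes a b c d s :: complex and \<omega> :: "nat \<Rightarrow> complex" and \<theta> :: "nat \<Rightarrow> real"
    and \<theta>star :: real
  assumes unit: "unitary2 a b c d"
    and sqrt: "s\<^sup>2 = a * d - b * c"
    and nz: "a * b * c * d \<noteq> 0"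
    and out: "\<And>M. M \<ge> 1 \<Longrightarrow> \<omega> M \<in> Bout a"
    and thpos: "\<And>M. M \<ge> 1 \<Longrightarrow> \<theta> M > 0"
    and thcosh: "\<And>M. M \<ge> 1 \<Longrightarrow> cosh (\<theta> M) = cmod (xfun a (\<omega> M))"
    and lim: "(\<lambda>M. real M * \<theta> M) \<longlonglongrightarrow> \<theta>star"
    and stpos: "\<theta>star > 0"
  shows "(\<lambda>M. energy a b c d s M (\<omega> M) / real M) \<longlonglongrightarrow>
           (1 / (sinh \<theta>star)\<^sup>2) * (sinh (2 * \<theta>star) / (2 * \<theta>star) - 1)"
proof -
  define q where "q = (cmod b)^2"
  have q0: "q > 0" unfolding q_def using nz by auto
  have ev1: "eventually (\<lambda>M::nat. M \<ge> 1) sequentially" by (rule eventually_ge_at_top)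
  have t0: "\<theta> \<longlonglongrightarrow> 0"
  proof -
    have "(\<lambda>M. (real M * \<theta> M) * inverse (real M)) \<longlonglongrightarrow> \<theta>star * 0"
      by (intro tendsto_mult lim tendsto_inverse_0_at_top filterlim_real_sequentially)
    moreover have "eventually (\<lambda>M. (real M * \<theta> M) * inverse (real M) = \<theta> M) sequentially"
      using ev1 by eventually_elim auto
    ultimately show ?thesis by (auto intro: Lim_transform_eventually)
  qed
  have tat: "filterlim \<theta> (at 0) sequentially"
  proof -
    have "eventually (\<lambda>M. \<theta> M \<in> UNIV \<and> \<theta> M \<noteq> 0) sequentially"
      using ev1 by eventually_elim (metis thpos less_irrefl UNIV_I)
    then show ?thesis unfolding filterlim_at using t0 by blast
  qed
  have so: "(\<lambda>M. sinh (\<theta> M) / \<theta> M) \<longlonglongrightarrow> 1"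
    by (rule filterlim_compose[OF sinh_over_lim tat])
  have Msh: "(\<lambda>M. real M * sinh (\<theta> M)) \<longlonglongrightarrow> \<theta>star"
  proof -
    have "(\<lambda>M. (real M * \<theta> M) * (sinh (\<theta> M) / \<theta> M)) \<longlonglongrightarrow> \<theta>star * 1"
      by (intro tendsto_mult lim so)
    moreover have "eventually (\<lambda>M. (real M * \<theta> M) * (sinh (\<theta> M) / \<theta> M) = real M * sinh (\<theta> M)) sequentially"
      using ev1
    proof eventually_elim
      case (elim M) then have "\<theta> M \<noteq> 0" using thpos by (metis less_irrefl)
      then show ?case by simp
    qed
    ultimately show ?thesis by (auto intro: Lim_transform_eventually)
  qed
  define Den where "Den M = (sinh (real M*\<theta> M))^2 - 2*(1-q)*cosh (\<theta> M)*sinh(real M*\<theta> M - \<theta> M)*sinh(real M*\<theta> M)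
                 + (1-q)*(sinh(real M*\<theta> M - \<theta> M))^2" for M
  define G where "G M = ((sinh (\<theta> M))^2 + 2*q*cosh (\<theta> M)*(sinh (2*(real M*\<theta> M)) / (4*(real M*sinh (\<theta> M))) - cosh (\<theta> M)/2)) / Den M" for M
  have DenL: "Den \<longlonglongrightarrow> q * (sinh \<theta>star)^2"
  proof -
    have "Den \<longlonglongrightarrow> (sinh \<theta>star)^2 - 2*(1-q)*cosh 0*sinh(\<theta>star - 0)*sinh \<theta>star + (1-q)*(sinh (\<theta>star - 0))^2"
      unfolding Den_def by (intro tendsto_intros lim t0)
    then show ?thesis by (simp add: algebra_simps power2_eq_square)
  qed
  have DenP: "q * (sinh \<theta>star)^2 > 0" using q0 stpos by simp
  have evD: "eventually (\<lambda>M. Den M > 0) sequentially"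
    using order_tendstoD(1)[OF DenL DenP] .
  have GL: "G \<longlonglongrightarrow> ((sinh 0)^2 + 2*q*cosh 0*(sinh (2*\<theta>star) / (4*\<theta>star) - cosh 0/2)) / (q * (sinh \<theta>star)^2)"
    unfolding G_def using stpos DenP by (intro tendsto_intros lim t0 Msh DenL) auto
  have val: "((sinh 0)^2 + 2*q*cosh 0*(sinh (2*\<theta>star) / (4*\<theta>star) - cosh 0/2)) / (q * (sinh \<theta>star)^2)
      = (1 / (sinh \<theta>star)\<^sup>2) * (sinh (2 * \<theta>star) / (2 * \<theta>star) - 1)"
    using q0 stpos by (simp add: field_simps)
  have eq: "eventually (\<lambda>M. G M = energy a b c d s M (\<omega> M) / real M) sequentially"
    using ev1 evD
  proof eventually_elim
    case (elim M)
    have w1: "cmod (\<omega> M) = 1" using out[OF elim(1)] unfolding Bout_def by simp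
    have rM: "real (M-1) * \<theta> M = real M * \<theta> M - \<theta> M" using elim(1) by (simp add: of_nat_diff algebra_simps)
    have DD: "Den M = (sinh (real M*\<theta> M))^2 - 2*(1-q)*cosh (\<theta> M)*sinh(real (M-1)*\<theta> M)*sinh(real M*\<theta> M)
                 + (1-q)*(sinh(real (M-1)*\<theta> M))^2" unfolding Den_def rM ..
    have E: "energy a b c d s M (\<omega> M) = (real M * (sinh (\<theta> M))^2
            + 2*q*cosh (\<theta> M)*(\<Sum>k<M. sinh (real k*\<theta> M) * sinh (real (Suc k)*\<theta> M))) / Den M"
      unfolding DD q_def
      by (rule energy_closed[OF unit sqrt nz w1 thpos[OF elim(1)] thcosh[OF elim(1)] elim(1)])
         (use elim(2) DD q_def in simp)
    have sh0: "sinh (\<theta> M) \<noteq> 0" using thpos[OF elim(1)] by simp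
    have H: "(\<Sum>k<M. sinh (real k*\<theta> M) * sinh (real (Suc k)*\<theta> M))
        = (sinh (2 * (real M * \<theta> M)) - 2 * real M * cosh (\<theta> M) * sinh (\<theta> M)) / (4 * sinh (\<theta> M))"
      using H3[of "\<theta> M" M] sh0 by (simp add: field_simps)
    show ?case unfolding E H G_def using sh0 elim by (simp add: field_simps)
  qed
  show ?thesis using Lim_transform_eventually[OF GL eq] val by simp
qed

end
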